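(* Let $\mathbb{F}$ be a field of characteristic zero and $n\ge1$. Let $L^n_{\mathbb{F}}$ be the set of all $A\in M_n(\mathbb{F})$ such that the Schur map $S_A\colon M_n(\mathbb{F})\to M_n(\mathbb{F})$, $S_A(B)=A\circ B$, is nonzero and multiplicative, and let $G^n_{\mathbb{F}}=\{A\in M_n(\mathbb{F}) : \text{there is }\lambda\in\mathbb{F}^{*}\text{ with } a_{ij}=\lambda^{j-i}\text{ for all } i,j\}$. Then $L^n_{\mathbb{F}}$, equipped with the Schur product, is an abelian group, and $G^n_{\mathbb{F}}$ is a subgroup of it consisting of Toeplitz matrices.
   Context: $A\circ B=(a_{ij}b_{ij})$ is the entrywise (Schur) product; $\mathbb{F}^*=\mathbb{F}\setminus\{0\}$. A Toeplitz matrix is one with $a_{ij}=a_{i+1,j+1}$ whenever both are defined. *)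

theory Defs
  imports "Jordan_Normal_Form.Matrix" "HOL-Algebra.Group"
begin

definition schur_prod :: "'a::times mat \<Rightarrow> 'a mat \<Rightarrow> 'a mat" where
  "schur_prod A B = mat (dim_row A) (dim_col A) (\<lambda>(i,j). A $$ (i,j) * B $$ (i,j))"

definition schur_map_nonzero :: "nat \<Rightarrow> 'a::field mat \<Rightarrow> bool" where
  "schur_map_nonzero n A \<longleftrightarrow> (\<exists>B \<in> carrier_mat n n. schur_prod A B \<noteq> 0\<^sub>m n n)"

definition schur_map_multiplicative :: "nat \<Rightarrow> 'a::field mat \<Rightarrow> bool" where
  "schur_map_multiplicative n A \<longleftrightarrow>
     (\<forall>B \<in> carrier_mat n n. \<forall>C \<in> carrier_mat n n.
        schur_prod A (B * C) = schur_prod A B * schur_prod A C)"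

definition L_set :: "nat \<Rightarrow> 'a::field mat set" where
  "L_set n = {A \<in> carrier_mat n n. schur_map_nonzero n A \<and> schur_map_multiplicative n A}"

definition G_set :: "nat \<Rightarrow> 'a::field mat set" where
  "G_set n = {A \<in> carrier_mat n n. \<exists>c::'a. c \<noteq> 0 \<and>
      (\<forall>i<n. \<forall>j<n. A $$ (i,j) = c powi (int j - int i))}"

definition toeplitz :: "'a mat \<Rightarrow> bool" where
  "toeplitz A \<longleftrightarrow> (\<forall>i j. Suc i < dim_row A \<and> Suc j < dim_col A \<longrightarrow>
      A $$ (i,j) = A $$ (Suc i, Suc j))"

definition schur_struct :: "nat \<Rightarrow> 'a::field mat monoid" where
  "schur_struct n = \<lparr>carrier = L_set n, monoid.mult = schur_prod,
                     one = mat n n (\<lambda>_. 1)\<rparr>"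

end

theory Submission
  imports Defs
begin

definition Emat :: "nat \<Rightarrow> nat \<Rightarrow> nat \<Rightarrow> 'a::field mat" where
  "Emat n i k = mat n n (\<lambda>(a,b). if a = i \<and> b = k then 1 else 0)"

lemma Emat_carrier: "Emat n i k \<in> carrier_mat n n"
  by (simp add: Emat_def)

lemma Emat_mult_entry:
  assumes "i < n" "j < n" "k < n"
  shows "(Emat n i k * Emat n k j :: 'a::field mat) $$ (i,j) = 1"
proof -
  have "(Emat n i k * Emat n k j :: 'a mat) $$ (i,j) =
        (\<Sum>l\<in>{0..<n}. (if l = k then 1 else 0) * (if l = k then (1::'a) else 0))"
    using assms by (simp add: Emat_def scalar_prod_def)
  also have "\<dots> = 1" using assms by (simp add: if_distrib cong: if_cong)
  finally show ?thesis .
qed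

lemma schurE_mult_entry:
  assumes "A \<in> carrier_mat n n" "i < n" "j < n" "k < n"
  shows "(schur_prod A (Emat n i k) * schur_prod A (Emat n k j) :: 'a::field mat) $$ (i,j)
         = A $$ (i,k) * A $$ (k,j)"
proof -
  have "(schur_prod A (Emat n i k) * schur_prod A (Emat n k j) :: 'a mat) $$ (i,j) =
        (\<Sum>l\<in>{0..<n}. A $$ (i, l) * (if l = k then 1 else 0) * (A $$ (l,j) * (if l = k then 1 else 0)))"
    using assms by (simp add: Emat_def schur_prod_def scalar_prod_def)
  also have "\<dots> = (\<Sum>l\<in>{0..<n}. if l = k then A $$ (i,k) * A $$ (k,j) else 0)"
    by (rule sum.cong) auto
  also have "\<dots> = A $$ (i,k) * A $$ (k,j)" using assms by simp
  finally show ?thesis .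
qed

lemma schur_prod_index:
  "A \<in> carrier_mat n m \<Longrightarrow> i < n \<Longrightarrow> j < m \<Longrightarrow> schur_prod A B $$ (i,j) = A$$(i,j) * B$$(i,j)"
  by (simp add: schur_prod_def)

definition Lc :: "nat \<Rightarrow> 'a::field mat set" where
  "Lc n = {A \<in> carrier_mat n n. (\<forall>i<n. \<forall>j<n. \<forall>k<n. A$$(i,j) = A$$(i,k)*A$$(k,j))
             \<and> (\<forall>i<n. \<forall>j<n. A$$(i,j) \<noteq> 0)}"

lemma L_sub_Lc:
  assumes "A \<in> L_set n" shows "(A::'a::field mat) \<in> Lc n"
proof -
  have A: "A \<in> carrier_mat n n" and nz: "schur_map_nonzero n A"
    and mu: "schur_map_multiplicative n A" using assms by (auto simp: L_set_def)
  have fac: "A$$(i,j) = A$$(i,k)*A$$(k,j)" if "i<n" "j<n" "k<n" for i j k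
  proof -
    have "schur_prod A (Emat n i k * Emat n k j) = schur_prod A (Emat n i k) * schur_prod A (Emat n k j)"
      using mu by (simp add: schur_map_multiplicative_def Emat_carrier)
    hence "schur_prod A (Emat n i k * Emat n k j) $$ (i,j) = A$$(i,k)*A$$(k,j)"
      using schurE_mult_entry[OF A that] by simp
    moreover have "schur_prod A (Emat n i k * Emat n k j) $$ (i,j) = A$$(i,j) * (Emat n i k * Emat n k j :: 'a mat) $$ (i,j)"
      using schur_prod_index[OF A that(1,2)] .
    moreover have "(Emat n i k * Emat n k j :: 'a mat) $$ (i,j) = 1" by (rule Emat_mult_entry[OF that])
    ultimately show ?thesis by simp
  qed
  obtain B where B: "B \<in> carrier_mat n n" "schur_prod A B \<noteq> 0\<^sub>m n n"
    using nz by (auto simp: schur_map_nonzero_def)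
  obtain i j where ij: "i<n" "j<n" "A$$(i,j) \<noteq> 0"
  proof -
    have "\<exists>i<n. \<exists>j<n. A$$(i,j) \<noteq> 0"
    proof (rule ccontr)
      assume "\<not> ?thesis"
      hence "schur_prod A B = 0\<^sub>m n n" using A by (intro eq_matI) (auto simp: schur_prod_def)
      thus False using B by simp
    qed
    thus ?thesis using that by blast
  qed
  have allnz: "A$$(p,q) \<noteq> 0" if "p<n" "q<n" for p q
  proof -
    have "A$$(i,j) = A$$(i,p)*A$$(p,j)" using fac ij that by blast
    hence ip: "A$$(i,p) \<noteq> 0" using ij by auto
    have "A$$(i,p) = A$$(i,p)*A$$(p,p)" using fac ij that by blast
    hence pp: "A$$(p,p) = 1" using ip by (metis mult_cancel_left1)
    have "A$$(p,p) = A$$(p,q)*A$$(q,p)" using fac that by blast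
    thus ?thesis using pp by auto
  qed
  have "\<forall>i<n. \<forall>j<n. \<forall>k<n. A$$(i,j) = A$$(i,k)*A$$(k,j)" using fac by blast
  moreover have "\<forall>i<n. \<forall>j<n. A$$(i,j) \<noteq> 0" using allnz by blast
  ultimately show ?thesis unfolding Lc_def using A by (intro CollectI conjI)
qed

lemma LcD:
  assumes "A \<in> Lc n"
  shows "A \<in> carrier_mat n n" "\<And>i j k. i<n \<Longrightarrow> j<n \<Longrightarrow> k<n \<Longrightarrow> A$$(i,j) = A$$(i,k)*A$$(k,j)"
    "\<And>i j. i<n \<Longrightarrow> j<n \<Longrightarrow> A$$(i,j) \<noteq> 0"
  using assms unfolding Lc_def by blast+

lemma LcI:
  assumes "A \<in> carrier_mat n n" "\<And>i j k. i<n \<Longrightarrow> j<n \<Longrightarrow> k<n \<Longrightarrow> A$$(i,j) = A$$(i,k)*A$$(k,j)"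
    "\<And>i j. i<n \<Longrightarrow> j<n \<Longrightarrow> A$$(i,j) \<noteq> 0"
  shows "A \<in> Lc n"
  using assms unfolding Lc_def by blast

lemma Lc_sub_L:
  assumes "A \<in> Lc n" "n \<ge> 1" shows "(A::'a::field mat) \<in> L_set n"
proof -
  note A = LcD(1)[OF assms(1)] and fac = LcD(2)[OF assms(1)] and nz = LcD(3)[OF assms(1)]
  have "schur_prod A (1\<^sub>m n) \<noteq> 0\<^sub>m n n"
  proof
    assume "schur_prod A (1\<^sub>m n) = 0\<^sub>m n n"
    hence "schur_prod A (1\<^sub>m n) $$ (0,0) = 0" using assms by simp
    moreover have "schur_prod A (1\<^sub>m n) $$ (0,0) = A $$ (0,0)"
      using assms(2) schur_prod_index[OF A, of 0 0 "1\<^sub>m n"] by simp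
    ultimately show False using nz[of 0 0] assms(2) by simp
  qed
  hence "schur_map_nonzero n A" by (auto simp: schur_map_nonzero_def)
  moreover have "schur_map_multiplicative n A"
    unfolding schur_map_multiplicative_def
  proof (intro ballI)
    fix B C :: "'a mat" assume B: "B \<in> carrier_mat n n" and C: "C \<in> carrier_mat n n"
    show "schur_prod A (B * C) = schur_prod A B * schur_prod A C"
    proof (rule eq_matI)
      fix i j assume ij: "i < dim_row (schur_prod A B * schur_prod A C)" "j < dim_col (schur_prod A B * schur_prod A C)"
      hence i: "i<n" and j: "j<n" using A by (auto simp: schur_prod_def)
      have "schur_prod A (B * C) $$ (i,j) = A$$(i,j) * (\<Sum>k\<in>{0..<n}. B$$(i,k) * C$$(k,j))"
        using A B C i j by (simp add: schur_prod_def scalar_prod_def)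
      also have "\<dots> = (\<Sum>k\<in>{0..<n}. (A$$(i,k) * B$$(i,k)) * (A$$(k,j) * C$$(k,j)))"
        unfolding sum_distrib_left
      proof (rule sum.cong)
        fix k assume "k \<in> {0..<n}"
        hence "A$$(i,j) = A$$(i,k)*A$$(k,j)" using fac[OF i j] by simp
        thus "A$$(i,j) * (B$$(i,k) * C$$(k,j)) = (A$$(i,k) * B$$(i,k)) * (A$$(k,j) * C$$(k,j))"
          by (simp add: mult_ac)
      qed simp
      also have "\<dots> = (schur_prod A B * schur_prod A C) $$ (i,j)"
        using A B C i j by (simp add: schur_prod_def scalar_prod_def)
      finally show "schur_prod A (B * C) $$ (i,j) = (schur_prod A B * schur_prod A C) $$ (i,j)" .
    qed (use A B C in \<open>auto simp: schur_prod_def\<close>)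
  qed
  ultimately show ?thesis using A by (simp add: L_set_def)
qed

lemma L_eq: "n \<ge> 1 \<Longrightarrow> L_set n = (Lc n :: 'a::field mat set)"
  using L_sub_Lc Lc_sub_L by blast

lemma Lc_mult: assumes "A \<in> Lc n" "B \<in> Lc n" shows "schur_prod A B \<in> (Lc n :: 'a::field mat set)"
proof (rule LcI)
  note A = LcD[OF assms(1)] and B = LcD[OF assms(2)]
  show "schur_prod A B \<in> carrier_mat n n" using A(1) by (simp add: schur_prod_def)
  fix i j k assume ijk: "i<n" "j<n" "k<n"
  have "A$$(i,j)*B$$(i,j) = (A$$(i,k)*A$$(k,j))*(B$$(i,k)*B$$(k,j))"
    using A(2)[OF ijk] B(2)[OF ijk] by simp
  thus "schur_prod A B $$ (i,j) = schur_prod A B $$ (i,k) * schur_prod A B $$ (k,j)"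
    using ijk schur_prod_index[OF A(1)] by (simp add: mult_ac)
next
  note A = LcD[OF assms(1)] and B = LcD[OF assms(2)]
  fix i j assume ij: "i<n" "j<n"
  thus "schur_prod A B $$ (i,j) \<noteq> 0" using A(3)[OF ij] B(3)[OF ij] schur_prod_index[OF A(1)] by simp
qed

lemma Lc_one: "mat n n (\<lambda>_. 1) \<in> (Lc n :: 'a::field mat set)"
  by (rule LcI) auto

lemma Lc_inv: assumes "A \<in> Lc n" shows "mat n n (\<lambda>ij. inverse (A $$ ij)) \<in> (Lc n :: 'a::field mat set)"
proof (rule LcI)
  note A = LcD[OF assms]
  show "mat n n (\<lambda>ij. inverse (A $$ ij)) \<in> carrier_mat n n" by simp
  fix i j k assume ijk: "i<n" "j<n" "k<n"
  have "inverse (A$$(i,j)) = inverse (A$$(i,k)) * inverse (A$$(k,j))"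
    using A(2)[OF ijk] by (simp add: inverse_mult_distrib)
  thus "mat n n (\<lambda>ij. inverse (A $$ ij)) $$ (i,j) = mat n n (\<lambda>ij. inverse (A $$ ij)) $$ (i,k) * mat n n (\<lambda>ij. inverse (A $$ ij)) $$ (k,j)"
    using ijk by simp
next
  note A = LcD[OF assms]
  fix i j assume ij: "i<n" "j<n"
  thus "mat n n (\<lambda>ij. inverse (A $$ ij)) $$ (i,j) \<noteq> 0" using A(3)[OF ij] by simp
qed

lemma schur_comm_group:
  assumes "n \<ge> 1"
  shows "comm_group (schur_struct n :: 'a::field mat monoid)"
proof (rule comm_groupI)
  note L = L_eq[OF assms, where 'a='a]
  have car: "carrier (schur_struct n :: 'a mat monoid) = Lc n" unfolding schur_struct_def L by simp
  have mul: "x \<otimes>\<^bsub>schur_struct n\<^esub> y = schur_prod x y" for x y :: "'a mat" by (simp add: schur_struct_def)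
  have one: "\<one>\<^bsub>schur_struct n\<^esub> = (mat n n (\<lambda>_. 1) :: 'a mat)" by (simp add: schur_struct_def)
  show "\<And>x y. x \<in> carrier (schur_struct n :: 'a mat monoid) \<Longrightarrow> y \<in> carrier (schur_struct n) \<Longrightarrow>
         x \<otimes>\<^bsub>schur_struct n\<^esub> y \<in> carrier (schur_struct n)"
    unfolding car mul by (rule Lc_mult)
  show "\<one>\<^bsub>schur_struct n\<^esub> \<in> carrier (schur_struct n :: 'a mat monoid)"
    unfolding car one by (rule Lc_one)
  show "\<And>x y z. x \<in> carrier (schur_struct n :: 'a mat monoid) \<Longrightarrow> y \<in> carrier (schur_struct n) \<Longrightarrow> z \<in> carrier (schur_struct n) \<Longrightarrow>
       x \<otimes>\<^bsub>schur_struct n\<^esub> y \<otimes>\<^bsub>schur_struct n\<^esub> z = x \<otimes>\<^bsub>schur_struct n\<^esub> (y \<otimes>\<^bsub>schur_struct n\<^esub> z)"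
    unfolding car mul by (auto dest!: LcD(1) simp: schur_prod_def mult_ac intro!: eq_matI)
  show "\<And>x y. x \<in> carrier (schur_struct n :: 'a mat monoid) \<Longrightarrow> y \<in> carrier (schur_struct n) \<Longrightarrow>
         x \<otimes>\<^bsub>schur_struct n\<^esub> y = y \<otimes>\<^bsub>schur_struct n\<^esub> x"
    unfolding car mul by (auto dest!: LcD(1) simp: schur_prod_def mult_ac intro!: eq_matI)
  show "\<And>x. x \<in> carrier (schur_struct n :: 'a mat monoid) \<Longrightarrow> \<one>\<^bsub>schur_struct n\<^esub> \<otimes>\<^bsub>schur_struct n\<^esub> x = x"
    unfolding car mul one by (auto dest!: LcD(1) simp: schur_prod_def intro!: eq_matI)
  show "\<And>x. x \<in> carrier (schur_struct n :: 'a mat monoid) \<Longrightarrow> \<exists>y\<in>carrier (schur_struct n). y \<otimes>\<^bsub>schur_struct n\<^esub> x = \<one>\<^bsub>schur_struct n\<^esub>"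
    unfolding car mul one
  proof -
    fix x :: "'a mat" assume x: "x \<in> Lc n"
    define y where "y = mat n n (\<lambda>ij. inverse (x $$ ij))"
    have "y \<in> Lc n" unfolding y_def by (rule Lc_inv[OF x])
    moreover have "schur_prod y x = mat n n (\<lambda>_. 1)" unfolding y_def
      using LcD(1,3)[OF x] by (auto simp: schur_prod_def intro!: eq_matI)
    ultimately show "\<exists>y\<in>Lc n. schur_prod y x = mat n n (\<lambda>_. 1)" by blast
  qed
qed

theorem proposition3p2:
  fixes n :: nat
  assumes "n \<ge> 1"
  shows "comm_group (schur_struct n :: 'a::field_char_0 mat monoid)
       \<and> subgroup (G_set n) (schur_struct n :: 'a mat monoid)
       \<and> (\<forall>A \<in> (G_set n :: 'a mat set). toeplitz A)"
proof (intro conjI ballI)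
  note L = L_eq[OF assms, where 'a='a]
  show cg: "comm_group (schur_struct n :: 'a::field_char_0 mat monoid)"
    by (rule schur_comm_group[OF assms])
  hence grp: "group (schur_struct n :: 'a mat monoid)" by (simp add: comm_group_def)
  have GL: "G_set n \<subseteq> (Lc n :: 'a mat set)"
  proof
    fix A :: "'a mat" assume "A \<in> G_set n"
    then obtain c where A: "A \<in> carrier_mat n n" "c \<noteq> 0"
      "\<And>i j. i<n \<Longrightarrow> j<n \<Longrightarrow> A $$ (i,j) = c powi (int j - int i)"
      by (auto simp: G_set_def)
    have pw: "c powi (int j - int i) = c powi (int k - int i) * c powi (int j - int k)" for i j k
      using power_int_add[of c "int k - int i" "int j - int k"] A(2) by simp
    show "A \<in> Lc n"
    proof (rule LcI[OF A(1)])
      fix i j k assume "i<n" "j<n" "k<n"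
      thus "A$$(i,j) = A$$(i,k)*A$$(k,j)" using A(3) pw[of j i k] by simp
    next
      fix i j assume "i<n" "j<n"
      thus "A$$(i,j) \<noteq> 0" using A(2,3) by simp
    qed
  qed
  show "subgroup (G_set n) (schur_struct n :: 'a mat monoid)"
  proof (rule group.subgroupI[OF grp])
    show "G_set n \<subseteq> carrier (schur_struct n :: 'a mat monoid)"
      using GL unfolding schur_struct_def L by simp
    have "mat n n (\<lambda>_. 1) \<in> (G_set n :: 'a mat set)"
      unfolding G_set_def by (intro CollectI conjI exI[of _ 1]) simp_all
    thus "(G_set n :: 'a mat set) \<noteq> {}" by blast
  next
    fix A :: "'a mat" assume AG: "A \<in> G_set n"
    then obtain c where A: "A \<in> carrier_mat n n" "c \<noteq> 0"
      "\<And>i j. i<n \<Longrightarrow> j<n \<Longrightarrow> A $$ (i,j) = c powi (int j - int i)"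
      by (auto simp: G_set_def)
    define Y where "Y = mat n n (\<lambda>ij. inverse (A $$ ij))"
    have YG: "Y \<in> G_set n" unfolding G_set_def Y_def using A
      by (auto intro!: exI[of _ "inverse c"] simp: power_int_inverse)
    have "Y \<otimes>\<^bsub>schur_struct n\<^esub> A = \<one>\<^bsub>schur_struct n\<^esub>"
      using A unfolding schur_struct_def Y_def
      by (auto simp: schur_prod_def intro!: eq_matI)
    moreover have "A \<in> carrier (schur_struct n)" "Y \<in> carrier (schur_struct n)"
      using GL AG YG unfolding schur_struct_def L by auto
    ultimately have "inv\<^bsub>schur_struct n\<^esub> A = Y" by (rule group.inv_equality[OF grp])
    thus "inv\<^bsub>schur_struct n\<^esub> A \<in> G_set n" using YG by simp
  next
    fix A B :: "'a mat" assume "A \<in> G_set n" "B \<in> G_set n"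
    then obtain c d where A: "A \<in> carrier_mat n n" "c \<noteq> 0"
      "\<And>i j. i<n \<Longrightarrow> j<n \<Longrightarrow> A $$ (i,j) = c powi (int j - int i)"
      and B: "B \<in> carrier_mat n n" "d \<noteq> 0"
      "\<And>i j. i<n \<Longrightarrow> j<n \<Longrightarrow> B $$ (i,j) = d powi (int j - int i)"
      by (auto simp: G_set_def)
    show "A \<otimes>\<^bsub>schur_struct n\<^esub> B \<in> G_set n"
      unfolding schur_struct_def G_set_def using A B
      by (auto simp: schur_prod_def power_int_mult_distrib intro!: exI[of _ "c*d"])
  qed
next
  fix A :: "'a mat" assume "A \<in> G_set n"
  then obtain c where A: "A \<in> carrier_mat n n"
      "\<And>i j. i<n \<Longrightarrow> j<n \<Longrightarrow> A $$ (i,j) = c powi (int j - int i)"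
      by (auto simp: G_set_def)
  show "toeplitz A" unfolding toeplitz_def using A by auto
qed

end
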